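(* Let $\Theta_1,\Theta_2$ be i.i.d. uniformly distributed directions on the unit sphere $S^{d-1}$. Let $t_1,t_2\ge0$ be deterministic with $t_1,t_2\le R_n$. Let $X_i\in B_d^{(\zeta)}$ be the point with $d(0,X_i)=R_n-t_i$ and direction $\Theta_i$, for $i=1,2$. Set $\omega_n=\log\log R_n$. Then, as $n\to\infty$, $$\mathbb P\bigl(d(X_1,X_2)\le R_n\bigr)\sim\frac{2^{d-1}}{(d-1)\kappa_{d-2}}\,e^{-\zeta(d-1)(R_n-t_1-t_2)/2},$$ uniformly on $\{(t_1,t_2):t_1+t_2\le R_n-\omega_n\}$.
   Context: Fix an integer $d\ge2$ and $\zeta>0$. The Poincaré ball $B_d^{(\zeta)}$ is the open unit ball in $\mathbb R^d$ with Riemannian metric $ds^2=\frac{4}{\zeta^2}\frac{|dx|^2}{(1-|x|^2)^2}$. The symbol $d(\cdot,\cdot)$ denotes the induced hyperbolic distance, so $d(0,x)=\zeta^{-1}\log\frac{1+|x|}{1-|x|}$. Points are described in hyperbolic polar coordinates: the radial part is $d(0,x)$ and the angular part is the direction $x/|x|\in S^{d-1}$. Let $\kappa_m=\int_0^\pi\sin^m\theta\,d\theta$. $R_n$ is a deterministic sequence with $R_n\to\infty$. The notation $a_n\sim b_n$ means $a_n/b_n\to1$. *)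

theory Defs
  imports "HOL-Probability.Probability"
begin

text \<open>Hyperbolic distance in the Poincare ball model with metric
  ds^2 = (4/zeta^2) |dx|^2 / (1-|x|^2)^2 (curvature -zeta^2).\<close>
definition hyp_dist :: "real \<Rightarrow> 'a::euclidean_space \<Rightarrow> 'a \<Rightarrow> real" where
  "hyp_dist \<zeta> x y =
     arcosh (1 + 2 * (norm (x - y))\<^sup>2 / ((1 - (norm x)\<^sup>2) * (1 - (norm y)\<^sup>2))) / \<zeta>"

text \<open>The point of the ball with hyperbolic radial part rho (i.e. hyp_dist zeta 0 x = rho)
  and angular part theta (a unit vector): its Euclidean norm r solves
  rho = zeta^-1 log((1+r)/(1-r)), i.e. r = tanh(zeta rho / 2).\<close>
definition hyp_point :: "real \<Rightarrow> real \<Rightarrow> 'a::euclidean_space \<Rightarrow> 'a" where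
  "hyp_point \<zeta> \<rho> \<theta> = tanh (\<zeta> * \<rho> / 2) *\<^sub>R \<theta>"

text \<open>Uniform (normalized surface) distribution on the unit sphere S^{d-1}:
  the radial projection of the uniform distribution on the unit ball.\<close>
definition unif_sphere :: "'a::euclidean_space measure" where
  "unif_sphere = distr (uniform_measure lborel (ball 0 1)) borel (\<lambda>x. x /\<^sub>R norm x)"

definition kappa :: "nat \<Rightarrow> real" where
  "kappa m = integral {0..pi} (\<lambda>\<theta>. sin \<theta> ^ m)"

end

theory Submission
  imports Defs
begin


typedef (overloaded) ('a::euclidean_space) dimidx = "{..<DIM('a)}" morphisms dRep dAbs
  by (rule exI[of _ 0]) simp

instance dimidx :: (euclidean_space) finite
proof
  have "(UNIV :: 'a dimidx set) = dAbs ` {..<DIM('a)}"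
    using type_definition.Abs_image[OF type_definition_dimidx[where 'a='a]] by simp
  then show "finite (UNIV :: 'a dimidx set)" by (metis finite_imageI finite_lessThan)
qed

instantiation dimidx :: (euclidean_space) linorder
begin
definition less_eq_dimidx :: "'a dimidx \<Rightarrow> 'a dimidx \<Rightarrow> bool" where "less_eq_dimidx x y \<longleftrightarrow> dRep x \<le> dRep y"
definition less_dimidx :: "'a dimidx \<Rightarrow> 'a dimidx \<Rightarrow> bool" where "less_dimidx x y \<longleftrightarrow> dRep x < dRep y"
instance by standard (auto simp: less_eq_dimidx_def less_dimidx_def dRep_inject)
end

instance dimidx :: (euclidean_space) wellorder
proof
  fix P :: "'a dimidx \<Rightarrow> bool" and a
  assume H: "\<And>x. (\<And>y. y < x \<Longrightarrow> P y) \<Longrightarrow> P x"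
  show "P a"
  proof (induct a rule: measure_induct_rule[where f=dRep])
    case (less x)
    then show ?case using H by (auto simp: less_dimidx_def)
  qed
qed

definition benum :: "nat \<Rightarrow> 'a::euclidean_space" where
  "benum = (SOME e. bij_betw e {..<DIM('a)} Basis)"

lemma bij_benum: "bij_betw (benum :: nat \<Rightarrow> 'a::euclidean_space) {..<DIM('a)} Basis"
proof -
  have "\<exists>e. bij_betw e {0..<card (Basis::'a set)} (Basis::'a set)"
    by (rule ex_bij_betw_nat_finite) simp
  then have "\<exists>e. bij_betw e {..<DIM('a)} (Basis::'a set)" by (simp add: lessThan_atLeast0)
  then show ?thesis unfolding benum_def by (rule someI_ex)
qed

definition bas :: "'a dimidx \<Rightarrow> 'a::euclidean_space" where "bas i = benum (dRep i)"

lemma bij_dRep: "bij_betw (dRep :: 'a::euclidean_space dimidx \<Rightarrow> nat) UNIV {..<DIM('a)}"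
  by (rule bij_betw_imageI) (auto simp: inj_on_def dRep_inject type_definition.Rep_range[OF type_definition_dimidx])

lemma bij_bas: "bij_betw (bas :: 'a dimidx \<Rightarrow> 'a::euclidean_space) UNIV Basis"
proof -
  have "bij_betw (benum \<circ> dRep) (UNIV :: 'a dimidx set) (Basis :: 'a set)"
    using bij_betw_trans[OF bij_dRep bij_benum] by simp
  then show ?thesis by (simp add: bas_def[abs_def] o_def)
qed

lemma bas_Basis: "bas i \<in> Basis" using bij_bas by (auto simp: bij_betw_def)

lemma bas_inj: "bas i = bas j \<longleftrightarrow> i = j"
  using bij_bas by (auto simp: bij_betw_def inj_on_def)

lemma bas_inner: "bas i \<bullet> bas j = (if i = j then 1 else 0)"
  using bas_Basis[of i] bas_Basis[of j] by (auto simp: inner_Basis bas_inj)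

lemma sum_bas: "(\<Sum>i\<in>UNIV. f (bas i)) = (\<Sum>b\<in>Basis. f b)"
  using sum.reindex_bij_betw[OF bij_bas, of f] by simp

lemma prod_bas: "(\<Prod>i\<in>UNIV. f (bas i)) = (\<Prod>b\<in>Basis. f b)"
  using prod.reindex_bij_betw[OF bij_bas, of f] by simp

lemma all_Basis_bas: "(\<forall>b\<in>Basis. P b) \<longleftrightarrow> (\<forall>i. P (bas i))"
proof
  assume "\<forall>b\<in>Basis. P b" then show "\<forall>i. P (bas i)" using bas_Basis by blast
next
  assume H: "\<forall>i. P (bas i)"
  show "\<forall>b\<in>Basis. P b"
  proof
    fix b :: 'a assume "b \<in> Basis"
    then have "b \<in> range bas" using bij_bas by (metis bij_betw_def)
    then obtain i where "b = bas i" by blast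
    then show "P b" using H by simp
  qed
qed

definition toV :: "'a::euclidean_space \<Rightarrow> real ^ ('a dimidx)" where
  "toV x = (\<chi> i. x \<bullet> bas i)"

definition fromV :: "real ^ ('a dimidx) \<Rightarrow> 'a::euclidean_space" where
  "fromV v = (\<Sum>i\<in>UNIV. (v $ i) *\<^sub>R bas i)"

lemma fromV_inner: "fromV v \<bullet> bas j = v $ j"
proof -
  have "fromV v \<bullet> bas j = (\<Sum>i\<in>UNIV. v $ i * (bas i \<bullet> bas j))"
    by (simp add: fromV_def inner_sum_left)
  also have "\<dots> = (\<Sum>i\<in>UNIV. if i = j then v $ j else 0)"
    by (rule sum.cong) (auto simp: bas_inner)
  also have "\<dots> = v $ j" by simp
  finally show ?thesis .
qed

lemma toV_fromV: "toV (fromV v) = v"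
  by (simp add: toV_def fromV_inner vec_eq_iff)

lemma fromV_toV: "fromV (toV x) = x"
proof -
  have "fromV (toV x) = (\<Sum>i\<in>UNIV. (x \<bullet> bas i) *\<^sub>R bas i)"
    by (simp add: fromV_def toV_def)
  also have "\<dots> = (\<Sum>b\<in>Basis. (x \<bullet> b) *\<^sub>R b)"
    by (rule sum_bas)
  also have "\<dots> = x" by (rule euclidean_representation)
  finally show ?thesis .
qed

lemma toV_inner: "toV x \<bullet> toV y = x \<bullet> y"
proof -
  have "toV x \<bullet> toV y = (\<Sum>i\<in>UNIV. (x \<bullet> bas i) * (y \<bullet> bas i))"
    by (simp add: toV_def inner_vec_def)
  also have "\<dots> = (\<Sum>b\<in>Basis. (x \<bullet> b) * (y \<bullet> b))"
    by (rule sum_bas)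
  also have "\<dots> = x \<bullet> y" by (rule euclidean_inner[symmetric])
  finally show ?thesis .
qed

lemma toV_norm: "norm (toV x) = norm x"
  by (simp add: norm_eq_sqrt_inner toV_inner)

lemma linear_toV: "linear toV"
  by (rule linearI) (simp_all add: toV_def vec_eq_iff inner_add_left)

lemma bij_toV: "bij toV"
  by (metis bij_betw_byWitness fromV_toV toV_fromV UNIV_I subsetI image_eqI)

lemma toV_cont: "continuous_on UNIV toV"
  by (intro linear_continuous_on) (simp add: linear_conv_bounded_linear[symmetric] linear_toV)

lemma toV_meas: "toV \<in> borel_measurable borel"
  by (rule borel_measurable_continuous_onI[OF toV_cont])

lemma prod_Basis_vec: "(\<Prod>c\<in>(Basis :: (real^'n) set). f c) = (\<Prod>i\<in>UNIV. f (axis i 1))"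
proof -
  have "(Basis :: (real^'n) set) = (\<lambda>i. axis i 1) ` UNIV"
    by (auto simp: Basis_vec_def)
  moreover have "inj (\<lambda>i::'n. axis i (1::real))"
    by (auto simp: inj_on_def axis_eq_axis)
  ultimately show ?thesis using prod.reindex[of "\<lambda>i::'n. axis i (1::real)" UNIV f] by simp
qed

lemma distr_toV: "distr lborel borel (toV :: 'a::euclidean_space \<Rightarrow> _) = lborel"
proof (rule lborel_eqI[symmetric])
  fix l u :: "real ^ ('a dimidx)"
  assume le: "\<And>b. b \<in> Basis \<Longrightarrow> l \<bullet> b \<le> u \<bullet> b"
  have lei: "l $ i \<le> u $ i" for i using le[of "axis i 1"] by (simp add: inner_axis)
  have pre: "toV -` box l u = box (fromV l) (fromV u :: 'a)"
  proof -
    have "x \<in> box (fromV l) (fromV u) \<longleftrightarrow> (\<forall>i. l $ i < x \<bullet> bas i \<and> x \<bullet> bas i < u $ i)" for x :: 'a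
      unfolding mem_box all_Basis_bas by (simp add: fromV_inner)
    then show ?thesis by (auto simp: mem_box_cart toV_def)
  qed
  have "emeasure (distr lborel borel toV) (box l u) = emeasure lborel (toV -` box l u)"
    using toV_meas by (subst emeasure_distr) auto
  also have "\<dots> = emeasure lborel (box (fromV l) (fromV u :: 'a))" by (simp add: pre)
  also have "\<dots> = (\<Prod>b\<in>Basis. (fromV u - fromV l :: 'a) \<bullet> b)"
    using lei by (subst emeasure_lborel_box_eq) (auto simp: all_Basis_bas fromV_inner inner_diff_left)
  also have "\<dots> = (\<Prod>i\<in>UNIV. (u $ i - l $ i))"
    by (subst prod_bas[symmetric]) (simp add: inner_diff_left fromV_inner)
  also have "\<dots> = (\<Prod>b\<in>Basis. (u - l) \<bullet> b)"
    by (simp add: prod_Basis_vec inner_axis)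
  finally show "emeasure (distr lborel borel toV) (box l u) = (\<Prod>b\<in>Basis. (u - l) \<bullet> b)" .
qed simp


lemma norm_sum_Basis_sq:
  fixes f :: "'b::euclidean_space \<Rightarrow> real"
  assumes "A \<subseteq> Basis"
  shows "norm (\<Sum>b\<in>A. f b *\<^sub>R b) = sqrt (\<Sum>b\<in>A. (f b)\<^sup>2)"
proof -
  have fin: "finite A" by (rule finite_subset[OF assms finite_Basis])
  have "(\<Sum>b\<in>A. f b *\<^sub>R b) \<bullet> (\<Sum>c\<in>A. f c *\<^sub>R c) = (\<Sum>b\<in>A. \<Sum>c\<in>A. f b * f c * (b \<bullet> c))"
    unfolding inner_sum_left inner_sum_right by (intro sum.cong refl) (simp add: algebra_simps inner_commute)
  also have "\<dots> = (\<Sum>b\<in>A. (f b)\<^sup>2)"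
  proof (rule sum.cong[OF refl])
    fix b assume b: "b \<in> A"
    have "(\<Sum>c\<in>A. f b * f c * (b \<bullet> c)) = (\<Sum>c\<in>A. if c = b then f b * f b else 0)"
    proof (rule sum.cong[OF refl])
      fix c assume c: "c \<in> A"
      then have bc: "b \<in> Basis" "c \<in> Basis" using b assms by auto
      show "f b * f c * (b \<bullet> c) = (if c = b then f b * f b else 0)" using bc by (auto simp: inner_Basis)
    qed
    also have "\<dots> = (f b)\<^sup>2" using b fin by (simp add: power2_eq_square)
    finally show "(\<Sum>c\<in>A. f b * f c * (b \<bullet> c)) = (f b)\<^sup>2" .
  qed
  finally have "(\<Sum>b\<in>A. f b *\<^sub>R b) \<bullet> (\<Sum>c\<in>A. f c *\<^sub>R c) = (\<Sum>b\<in>A. (f b)\<^sup>2)" .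
  then show ?thesis unfolding norm_eq_sqrt_inner by simp
qed

lemma nn_integral_power_Icc:
  fixes c h :: real and m :: nat assumes "h > 0" "c \<ge> 0"
  shows "(\<integral>\<^sup>+ y. ennreal (c * y ^ m) * indicator {0..h} y \<partial>lborel) = ennreal (c * h ^ Suc m / Suc m)"
proof -
  have "(\<integral>\<^sup>+ y. ennreal (c * y ^ m) * indicator {0..h} y \<partial>lborel) = ennreal (c * h ^ Suc m / Suc m - c * 0 ^ Suc m / Suc m)"
  proof (rule nn_integral_FTC_Icc)
    show "(\<lambda>y. c * y ^ m) \<in> borel_measurable borel" by measurable
    fix x :: real assume "x \<in> {0..h}"
    have dp: "((\<lambda>y. y ^ Suc m) has_real_derivative real (Suc m) * x ^ m) (at x)"
      using DERIV_pow[of "Suc m" x] by simp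
    then have "((\<lambda>y. c * y ^ Suc m / Suc m) has_real_derivative c * (real (Suc m) * x ^ m) / Suc m) (at x)"
      using DERIV_cdivide[OF DERIV_cmult[OF dp, of c], of "real (Suc m)"] by simp
    then show "((\<lambda>y. c * y ^ Suc m / Suc m) has_real_derivative c * x ^ m) (at x)"
      by simp
    show "0 \<le> c * x ^ m" using \<open>x \<in> {0..h}\<close> assms by auto
  qed (use assms in auto)
  then show ?thesis by simp
qed

lemma emeasure_coneK:
  fixes b0 :: "'b::euclidean_space"
  assumes b0: "b0 \<in> Basis" and h: "h > 0" and k: "k > 0"
  shows "emeasure lborel {x::'b. 0 \<le> x \<bullet> b0 \<and> x \<bullet> b0 \<le> h \<and> norm (x - (x \<bullet> b0) *\<^sub>R b0) \<le> k * (x \<bullet> b0)}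
     = ennreal (unit_ball_vol (real (DIM('b) - 1)) * k ^ (DIM('b) - 1) * h ^ DIM('b) / DIM('b))"
proof -
  define A where "A = Basis - {b0}"
  have BA: "Basis = insert b0 A" and b0A: "b0 \<notin> A" and finA: "finite A" and cardA: "card A = DIM('b) - 1"
    using b0 by (auto simp: A_def)
  define m where "m = DIM('b) - 1"
  have dm: "DIM('b) = Suc m" unfolding m_def using DIM_positive[where 'a='b] by linarith
  define g :: "('b \<Rightarrow> real) \<Rightarrow> 'b" where "g f = (\<Sum>b\<in>Basis. f b *\<^sub>R b)" for f
  define S where "S = {x::'b. 0 \<le> x \<bullet> b0 \<and> x \<bullet> b0 \<le> h \<and> norm (x - (x \<bullet> b0) *\<^sub>R b0) \<le> k * (x \<bullet> b0)}"
  have Sb: "S \<in> sets borel" unfolding S_def by measurable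
  have g_split: "g f = f b0 *\<^sub>R b0 + (\<Sum>b\<in>A. f b *\<^sub>R b)" for f
    unfolding g_def BA using b0A finA by (simp add: sum.insert)
  have gb0: "g f \<bullet> b0 = f b0" for f
  proof -
    have "g f \<bullet> b0 = (\<Sum>b\<in>Basis. f b * (b \<bullet> b0))" unfolding g_def by (simp add: inner_sum_left)
    also have "\<dots> = (\<Sum>b\<in>Basis. if b = b0 then f b0 else 0)"
      by (rule sum.cong[OF refl]) (use b0 in \<open>auto simp: inner_Basis\<close>)
    also have "\<dots> = f b0" using b0 by simp
    finally show ?thesis .
  qed
  have gperp: "norm (g f - (g f \<bullet> b0) *\<^sub>R b0) = sqrt (\<Sum>b\<in>A. (f b)\<^sup>2)" for f
  proof -
    have "g f - (g f \<bullet> b0) *\<^sub>R b0 = (\<Sum>b\<in>A. f b *\<^sub>R b)" unfolding gb0 by (subst g_split) simp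
    moreover have "A \<subseteq> Basis" by (auto simp: A_def)
    ultimately show ?thesis using norm_sum_Basis_sq[of A f] by simp
  qed
  have gS: "g f \<in> S \<longleftrightarrow> 0 \<le> f b0 \<and> f b0 \<le> h \<and> sqrt (\<Sum>b\<in>A. (f b)\<^sup>2) \<le> k * f b0" for f
    unfolding S_def using gperp[of f] gb0[of f] by simp
  have gmeas: "g \<in> borel_measurable (Pi\<^sub>M Basis (\<lambda>_. lborel))"
    unfolding g_def by measurable
  interpret product_sigma_finite "\<lambda>_::'b. lborel"
    by standard
  define X where "X = g -` S \<inter> space (Pi\<^sub>M Basis (\<lambda>_. lborel))"
  have Xm: "X \<in> sets (Pi\<^sub>M (insert b0 A) (\<lambda>_. lborel))"
    unfolding X_def BA[symmetric] using gmeas Sb by (rule measurable_sets)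
  have "emeasure lborel S = emeasure (distr (Pi\<^sub>M Basis (\<lambda>_. lborel)) borel g) S"
  proof -
    have "(lborel::'b measure) = distr (Pi\<^sub>M Basis (\<lambda>_. lborel)) borel g"
      unfolding g_def[abs_def] by (rule lborel_eq)
    then show ?thesis by simp
  qed
  also have "\<dots> = emeasure (Pi\<^sub>M Basis (\<lambda>_. lborel)) X"
    unfolding X_def using gmeas Sb by (subst emeasure_distr) auto
  also have "\<dots> = (\<integral>\<^sup>+ f. indicator X f \<partial>Pi\<^sub>M (insert b0 A) (\<lambda>_. lborel))"
    using Xm by (simp add: BA[symmetric])
  also have "\<dots> = (\<integral>\<^sup>+ y. \<integral>\<^sup>+ x. indicator X (x(b0 := y)) \<partial>Pi\<^sub>M A (\<lambda>_. lborel) \<partial>lborel)"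
    using finA b0A Xm by (subst product_nn_integral_insert_rev) auto
  also have "\<dots> = (\<integral>\<^sup>+ y. \<integral>\<^sup>+ x. indicator {0..h} y * indicator ({f. sqrt (\<Sum>i\<in>A. (f i)\<^sup>2) \<le> k * y} \<inter> space (Pi\<^sub>M A (\<lambda>_. lborel))) x \<partial>Pi\<^sub>M A (\<lambda>_. lborel) \<partial>lborel)"
  proof (intro nn_integral_cong)
    fix y :: real and x :: "'b \<Rightarrow> real" assume x: "x \<in> space (Pi\<^sub>M A (\<lambda>_::'b. lborel))"
    have sum_eq: "(\<Sum>i\<in>A. ((x(b0 := y)) i)\<^sup>2) = (\<Sum>i\<in>A. (x i)\<^sup>2)"
      using b0A by (intro sum.cong) auto
    have sp: "x(b0 := y) \<in> space (Pi\<^sub>M Basis (\<lambda>_::'b. lborel))"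
      using x unfolding BA by (auto simp: space_PiM PiE_def extensional_def)
    show "indicator X (x(b0 := y)) = (indicator {0..h} y :: ennreal) * indicator ({f. sqrt (\<Sum>i\<in>A. (f i)\<^sup>2) \<le> k * y} \<inter> space (Pi\<^sub>M A (\<lambda>_. lborel))) x"
      using sp x gS[of "x(b0 := y)"] sum_eq unfolding X_def
      by (auto simp: indicator_def)
  qed
  also have "\<dots> = (\<integral>\<^sup>+ y. indicator {0..h} y * emeasure (Pi\<^sub>M A (\<lambda>_. lborel)) ({f. sqrt (\<Sum>i\<in>A. (f i)\<^sup>2) \<le> k * y} \<inter> space (Pi\<^sub>M A (\<lambda>_. lborel))) \<partial>lborel)"
  proof (intro nn_integral_cong)
    fix y :: real
    have ms: "{f. sqrt (\<Sum>i\<in>A. (f i)\<^sup>2) \<le> k * y} \<inter> space (Pi\<^sub>M A (\<lambda>_::'b. lborel)) \<in> sets (Pi\<^sub>M A (\<lambda>_. lborel))"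
      by measurable
    show "(\<integral>\<^sup>+ x. (indicator {0..h} y :: ennreal) * indicator ({f. sqrt (\<Sum>i\<in>A. (f i)\<^sup>2) \<le> k * y} \<inter> space (Pi\<^sub>M A (\<lambda>_. lborel))) x \<partial>Pi\<^sub>M A (\<lambda>_. lborel)) =
       indicator {0..h} y * emeasure (Pi\<^sub>M A (\<lambda>_. lborel)) ({f. sqrt (\<Sum>i\<in>A. (f i)\<^sup>2) \<le> k * y} \<inter> space (Pi\<^sub>M A (\<lambda>_. lborel)))"
      using ms by (subst nn_integral_cmult) auto
  qed
  also have "\<dots> = (\<integral>\<^sup>+ y. ennreal (unit_ball_vol (real m) * k ^ m * y ^ m) * indicator {0..h} y \<partial>lborel)"
  proof (intro nn_integral_cong_AE)
    have "AE y in lborel. y \<noteq> 0" by (rule AE_lborel_singleton)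
    then show "AE y in lborel. indicator {0..h} y * emeasure (Pi\<^sub>M A (\<lambda>_. lborel)) ({f. sqrt (\<Sum>i\<in>A. (f i)\<^sup>2) \<le> k * y} \<inter> space (Pi\<^sub>M A (\<lambda>_. lborel)))
         = ennreal (unit_ball_vol (real m) * k ^ m * y ^ m) * indicator {0..h} y"
    proof eventually_elim
      case (elim y)
      show ?case
      proof (cases "y \<in> {0..h}")
        case True
        with elim have "k * y > 0" using k by auto
        then have "emeasure (Pi\<^sub>M A (\<lambda>_. lborel)) ({f. sqrt (\<Sum>i\<in>A. (f i)\<^sup>2) \<le> k * y} \<inter> space (Pi\<^sub>M A (\<lambda>_. lborel)))
            = ennreal (unit_ball_vol (real (card A)) * (k * y) ^ card A)"
          using finA by (intro emeasure_cball_aux) auto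
        then show ?thesis using True by (simp add: cardA m_def power_mult_distrib mult_ac)
      qed simp
    qed
  qed
  also have "\<dots> = ennreal (unit_ball_vol (real m) * k ^ m * h ^ Suc m / Suc m)"
    using h k by (intro nn_integral_power_Icc) auto
  finally show ?thesis unfolding S_def by (simp add: dm)
qed


definition coneset :: "'a::real_inner \<Rightarrow> real \<Rightarrow> 'a set" where
  "coneset u c = {x. norm x \<le> 1 \<and> c * norm x \<le> x \<bullet> u}"

lemma coneset_borel: "coneset (u::'a::euclidean_space) c \<in> sets borel"
  unfolding coneset_def by measurable

lemma coneset_compact: "compact (coneset (u::'a::euclidean_space) c)"
  unfolding compact_eq_bounded_closed
proof
  show "bounded (coneset u c)" unfolding coneset_def bounded_iff by auto
  have "closed {x::'a. norm x \<le> 1}" by (intro closed_Collect_le continuous_intros)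
  moreover have "closed {x::'a. c * norm x \<le> x \<bullet> u}" by (intro closed_Collect_le continuous_intros)
  ultimately show "closed (coneset u c)" unfolding coneset_def Collect_conj_eq by (rule closed_Int)
qed

lemma image_coneset:
  fixes f :: "'a::real_inner \<Rightarrow> 'b::real_inner"
  assumes inn: "\<And>x y. f x \<bullet> f y = x \<bullet> y" and sf: "surj f"
  shows "f ` coneset u c = coneset (f u) c"
proof -
  have nf: "norm (f x) = norm x" for x by (simp add: norm_eq_sqrt_inner inn)
  show ?thesis
  proof
    show "f ` coneset u c \<subseteq> coneset (f u) c" by (auto simp: coneset_def nf inn)
    show "coneset (f u) c \<subseteq> f ` coneset u c"
    proof
      fix y assume y: "y \<in> coneset (f u) c"
      obtain x where x: "y = f x" using sf by (metis surjD)
      have "x \<in> coneset u c" using y by (simp add: x coneset_def nf inn)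
      then show "y \<in> f ` coneset u c" using x by blast
    qed
  qed
qed

lemma emeasure_toV_coneset: "emeasure lborel (coneset (toV u) c) = emeasure lborel (coneset (u::'a::euclidean_space) c)"
proof -
  have img: "toV ` coneset u c = coneset (toV u) c"
    by (rule image_coneset) (auto simp: toV_inner bij_toV bij_is_surj)
  have "emeasure lborel (coneset (toV u) c) = emeasure (distr lborel borel toV) (coneset (toV u) c)"
    by (simp add: distr_toV)
  also have "\<dots> = emeasure lborel (toV -` coneset (toV u) c)"
    using toV_meas coneset_borel by (subst emeasure_distr) auto
  also have "toV -` coneset (toV u) c = coneset u c"
    unfolding img[symmetric] by (rule inj_vimage_image_eq[OF bij_is_inj[OF bij_toV]])
  finally show ?thesis .
qed

lemma measure_coneset_rot:
  fixes u v :: "'a::euclidean_space"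
  assumes "norm u = 1" "norm v = 1"
  shows "measure lborel (coneset u c) = measure lborel (coneset v c)"
proof -
  obtain f where f: "orthogonal_transformation f" "f (toV u) = toV v"
    using orthogonal_transformation_exists[of "toV u" "toV v"] assms by (auto simp: toV_norm)
  have img: "f ` coneset (toV u) c = coneset (toV v) c"
    using f by (subst image_coneset) (auto simp: orthogonal_transformation_def orthogonal_transformation_surj)
  have "measure lborel (coneset u c) = measure lborel (coneset (toV u) c)"
    by (simp add: measure_def emeasure_toV_coneset)
  also have "\<dots> = measure lebesgue (coneset (toV u) c)"
    by (rule measure_completion[symmetric]) (simp add: coneset_borel)
  also have "\<dots> = measure lebesgue (f ` coneset (toV u) c)"
    by (rule measure_orthogonal_image[symmetric, OF f(1) lmeasurable_compact[OF coneset_compact]])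
  also have "\<dots> = measure lebesgue (coneset (toV v) c)" by (simp add: img)
  also have "\<dots> = measure lborel (coneset (toV v) c)"
    by (rule measure_completion) (simp add: coneset_borel)
  also have "\<dots> = measure lborel (coneset v c)"
    by (simp add: measure_def emeasure_toV_coneset)
  finally show ?thesis .
qed


lemma pyth_b0:
  fixes x b0 :: "'a::euclidean_space"
  assumes "norm b0 = 1"
  shows "(norm (x - (x \<bullet> b0) *\<^sub>R b0))\<^sup>2 = (norm x)\<^sup>2 - (x \<bullet> b0)\<^sup>2"
proof -
  have bb: "b0 \<bullet> b0 = 1" using assms by (simp add: norm_eq_1)
  show ?thesis unfolding power2_norm_eq_inner
    by (simp add: inner_diff_left inner_diff_right bb inner_commute power2_eq_square algebra_simps)
qed

lemma coneset_bounds: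
  fixes b0 :: "'a::euclidean_space"
  assumes b0: "b0 \<in> Basis" and c0: "0 < c" and c1: "c < 1"
  defines "s \<equiv> sqrt (1 - c\<^sup>2)" and "m \<equiv> DIM('a) - 1"
  shows "unit_ball_vol m * s ^ m * c / DIM('a) \<le> measure lborel (coneset b0 c)"
    and "measure lborel (coneset b0 c) \<le> unit_ball_vol m * s ^ m / (c ^ m * DIM('a))"
proof -
  define K where "K h k = {x::'a. 0 \<le> x \<bullet> b0 \<and> x \<bullet> b0 \<le> h \<and> norm (x - (x \<bullet> b0) *\<^sub>R b0) \<le> k * (x \<bullet> b0)}" for h k
  have nb0: "norm b0 = 1" using b0 by simp
  have s2: "s\<^sup>2 = 1 - c\<^sup>2" unfolding s_def using c0 c1
    by (simp add: abs_square_le_1 less_imp_le)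
  have s0: "s > 0" unfolding s_def using c0 c1 by (simp add: abs_square_less_1)
  have dm: "DIM('a) = Suc m" unfolding m_def using DIM_positive[where 'a='a] by linarith
  have Ksets: "K h k \<in> sets lborel" for h k unfolding K_def by measurable
  have Kmeas: "emeasure lborel (K h k) = ennreal (unit_ball_vol (real m) * k ^ m * h ^ DIM('a) / DIM('a))"
    if "h > 0" "k > 0" for h k
    unfolding K_def m_def by (rule emeasure_coneK[OF b0 that])
  have Kfm: "K h k \<in> fmeasurable lborel" if "h > 0" "k > 0" for h k
    using Kmeas[OF that] Ksets by (intro fmeasurableI) auto
  have Kmeasure: "measure lborel (K h k) = unit_ball_vol (real m) * k ^ m * h ^ DIM('a) / DIM('a)"
    if "h > 0" "k > 0" for h k
    using Kmeas[OF that] that by (simp add: measure_def)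
  have Cfm: "coneset b0 c \<in> fmeasurable lborel"
    using coneset_compact[of b0 c] coneset_borel[of b0 c]
    by (intro fmeasurableI emeasure_bounded_finite) (auto dest: compact_imp_bounded)
  have sub1: "K c (s / c) \<subseteq> coneset b0 c"
  proof
    fix x assume x: "x \<in> K c (s / c)"
    define y where "y = x \<bullet> b0"
    define z where "z = norm (x - (x \<bullet> b0) *\<^sub>R b0)"
    have y0: "0 \<le> y" and yc: "y \<le> c" and zy: "z \<le> s / c * y" using x by (auto simp: K_def y_def z_def)
    have z0: "0 \<le> z" by (simp add: z_def)
    have "z\<^sup>2 \<le> (s / c * y)\<^sup>2" using power_mono[OF zy z0, of 2] by simp
    also have "\<dots> = (1 - c\<^sup>2) * y\<^sup>2 / c\<^sup>2" by (simp add: power_mult_distrib power_divide s2)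
    finally have z2: "z\<^sup>2 \<le> (1 - c\<^sup>2) * y\<^sup>2 / c\<^sup>2" .
    have nx: "(norm x)\<^sup>2 = y\<^sup>2 + z\<^sup>2" using pyth_b0[OF nb0, of x] by (simp add: y_def z_def)
    have "(c * norm x)\<^sup>2 = c\<^sup>2 * (y\<^sup>2 + z\<^sup>2)" by (simp add: power_mult_distrib nx)
    also have "\<dots> \<le> c\<^sup>2 * (y\<^sup>2 + (1 - c\<^sup>2) * y\<^sup>2 / c\<^sup>2)" using z2 by (intro mult_left_mono) auto
    also have "\<dots> = y\<^sup>2" using c0 by (simp add: field_simps)
    finally have "(c * norm x)\<^sup>2 \<le> y\<^sup>2" .
    then have cy: "c * norm x \<le> y" using y0 by (rule power2_le_imp_le)
    then have "c * norm x \<le> c * 1" using yc by simp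
    then have "norm x \<le> 1" using c0 by simp
    then show "x \<in> coneset b0 c" using cy by (simp add: coneset_def y_def)
  qed
  have sub2: "coneset b0 c \<subseteq> K 1 (s / c)"
  proof
    fix x assume x: "x \<in> coneset b0 c"
    define y where "y = x \<bullet> b0"
    define z where "z = norm (x - (x \<bullet> b0) *\<^sub>R b0)"
    have cy: "c * norm x \<le> y" and nx1: "norm x \<le> 1" using x unfolding coneset_def y_def by auto
    have "0 \<le> c * norm x" using c0 by simp
    then have y0: "0 \<le> y" using cy by linarith
    have "y \<le> norm x * norm b0" unfolding y_def by (rule norm_cauchy_schwarz)
    then have y1: "y \<le> 1" using nx1 nb0 by simp
    have z0: "0 \<le> z" by (simp add: z_def)
    have nx: "z\<^sup>2 = (norm x)\<^sup>2 - y\<^sup>2" using pyth_b0[OF nb0, of x] unfolding y_def z_def by simp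
    have "(c * norm x)\<^sup>2 \<le> y\<^sup>2"
      using power_mono[OF cy \<open>0 \<le> c * norm x\<close>, of 2] by simp
    then have cn: "(norm x)\<^sup>2 * c\<^sup>2 \<le> y\<^sup>2" by (simp add: power_mult_distrib mult.commute)
    have c2: "0 < c\<^sup>2" using c0 by simp
    have "(norm x)\<^sup>2 \<le> y\<^sup>2 / c\<^sup>2" using cn pos_le_divide_eq[OF c2] by simp
    then have "z\<^sup>2 \<le> y\<^sup>2 / c\<^sup>2 - y\<^sup>2" using nx by simp
    also have "\<dots> = (1 - c\<^sup>2) * y\<^sup>2 / c\<^sup>2" using c2 by (simp add: diff_divide_distrib left_diff_distrib)
    also have "\<dots> = (s / c * y)\<^sup>2" by (simp add: power_mult_distrib power_divide s2)
    finally have zz: "z\<^sup>2 \<le> (s / c * y)\<^sup>2" .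
    have "0 \<le> s / c * y" using s0 c0 y0 by simp
    then have "z \<le> s / c * y" using zz by (rule power2_le_imp_le[rotated])
    then show "x \<in> K 1 (s / c)" using y0 y1 by (simp add: K_def y_def z_def)
  qed
  have "measure lborel (K c (s / c)) \<le> measure lborel (coneset b0 c)"
    using sub1 Ksets Cfm by (intro measure_mono_fmeasurable) auto
  moreover have "measure lborel (K c (s / c)) = unit_ball_vol m * s ^ m * c / DIM('a)"
  proof -
    have e: "(s / c) ^ m * c ^ DIM('a) = s ^ m * c"
    proof -
      have "(s / c) ^ m * c ^ DIM('a) = ((s / c) * c) ^ m * c" unfolding dm power_Suc power_mult_distrib by (simp add: mult_ac)
      also have "(s / c) * c = s" using c0 by simp
      finally show ?thesis .
    qed
    have "measure lborel (K c (s / c)) = unit_ball_vol (real m) * ((s / c) ^ m * c ^ DIM('a)) / DIM('a)"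
      using c0 s0 by (simp add: Kmeasure mult.assoc)
    then show ?thesis by (simp only: e mult.assoc)
  qed
  ultimately show "unit_ball_vol m * s ^ m * c / DIM('a) \<le> measure lborel (coneset b0 c)" by simp
  have "measure lborel (coneset b0 c) \<le> measure lborel (K 1 (s / c))"
    using sub2 coneset_borel[of b0 c] c0 s0 by (intro measure_mono_fmeasurable Kfm) auto
  moreover have "measure lborel (K 1 (s / c)) = unit_ball_vol m * s ^ m / (c ^ m * DIM('a))"
    using c0 s0 by (simp add: Kmeasure power_divide)
  ultimately show "measure lborel (coneset b0 c) \<le> unit_ball_vol m * s ^ m / (c ^ m * DIM('a))" by simp
qed


lemma ball_emeasure: "emeasure lborel (ball (0::'a::euclidean_space) 1) = ennreal (unit_ball_vol DIM('a))"
  using emeasure_ball[of 1 "0::'a"] by simp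

lemma ball_emeasure_ne: "emeasure lborel (ball (0::'a::euclidean_space) 1) \<noteq> 0"
  "emeasure lborel (ball (0::'a::euclidean_space) 1) \<noteq> \<infinity>"
proof -
  have "unit_ball_vol (real DIM('a)) > 0" by (rule unit_ball_vol_pos) simp
  then have ne: "unit_ball_vol (real DIM('a)) \<noteq> 0" "\<not> unit_ball_vol (real DIM('a)) \<le> 0" by linarith+
  then show "emeasure lborel (ball (0::'a::euclidean_space) 1) \<noteq> 0"
    "emeasure lborel (ball (0::'a::euclidean_space) 1) \<noteq> \<infinity>" by (simp_all add: ball_emeasure ne)
qed

lemma sets_unif_sphere [simp, measurable_cong]: "sets (unif_sphere :: 'a::euclidean_space measure) = sets borel"
  by (simp add: unif_sphere_def)

lemma space_unif_sphere [simp]: "space (unif_sphere :: 'a::euclidean_space measure) = UNIV"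
  by (simp add: unif_sphere_def)

lemma normalize_meas: "(\<lambda>x::'a::euclidean_space. x /\<^sub>R norm x) \<in> borel_measurable (uniform_measure lborel (ball 0 1))"
proof -
  have "(\<lambda>x::'a::euclidean_space. x /\<^sub>R norm x) \<in> borel_measurable borel" by measurable
  then show ?thesis by (simp add: measurable_def)
qed

lemma prob_space_unif_sphere: "prob_space (unif_sphere :: 'a::euclidean_space measure)"
proof -
  interpret P: prob_space "uniform_measure lborel (ball (0::'a) 1)"
    by (rule prob_space_uniform_measure[OF ball_emeasure_ne])
  show ?thesis unfolding unif_sphere_def by (rule P.prob_space_distr[OF normalize_meas])
qed

lemma AE_unif_sphere_norm: "AE \<theta> in (unif_sphere :: 'a::euclidean_space measure). norm \<theta> = 1"
proof -
  have "AE x in lborel. x \<noteq> (0::'a)" by (rule AE_lborel_singleton)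
  then have "AE x in uniform_measure lborel (ball (0::'a) 1). x \<noteq> 0"
    by (intro AE_uniform_measureI) (auto elim!: eventually_mono)
  then have "AE x in uniform_measure lborel (ball (0::'a) 1). norm (x /\<^sub>R norm x) = 1"
    by eventually_elim simp
  moreover have "{\<theta>::'a. norm \<theta> = 1} \<in> sets borel" by measurable
  ultimately show ?thesis unfolding unif_sphere_def
    by (subst AE_distr_iff) (auto simp: normalize_meas)
qed

lemma sphere_null: "sphere (0::'a::euclidean_space) 1 \<in> null_sets lborel"
  using negligible_sphere[of "0::'a" 1]
  by (auto simp: null_sets_completion_iff negligible_iff_null_sets negligible_convex_frontier)

lemma unif_sphere_cap:
  fixes u :: "'a::euclidean_space"
  assumes "0 < c"
  shows "measure unif_sphere {\<theta>. c \<le> \<theta> \<bullet> u} = measure lborel (coneset u c) / unit_ball_vol DIM('a)"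
proof -
  let ?U = "uniform_measure lborel (ball (0::'a) 1)"
  let ?g = "\<lambda>x::'a. x /\<^sub>R norm x"
  have Sb: "{\<theta>::'a. c \<le> \<theta> \<bullet> u} \<in> sets borel" by measurable
  have "measure unif_sphere {\<theta>. c \<le> \<theta> \<bullet> u} = measure ?U (?g -` {\<theta>. c \<le> \<theta> \<bullet> u} \<inter> space ?U)"
    unfolding unif_sphere_def using normalize_meas Sb by (rule measure_distr)
  also have "\<dots> = measure lborel (ball 0 1 \<inter> (?g -` {\<theta>. c \<le> \<theta> \<bullet> u})) / measure lborel (ball (0::'a) 1)"
  proof -
    have "?g -` {\<theta>. c \<le> \<theta> \<bullet> u} \<in> sets borel"
    proof -
      have "?g \<in> borel_measurable borel" by measurable
      from measurable_sets[OF this Sb] show ?thesis by simp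
    qed
    then show ?thesis using ball_emeasure_ne by (subst measure_uniform_measure) auto
  qed
  also have "ball 0 1 \<inter> (?g -` {\<theta>. c \<le> \<theta> \<bullet> u}) = coneset u c - ({0} \<union> sphere 0 1)"
  proof (intro set_eqI iffI)
    fix x assume x: "x \<in> ball 0 1 \<inter> (?g -` {\<theta>. c \<le> \<theta> \<bullet> u})"
    then have "c \<le> (x /\<^sub>R norm x) \<bullet> u" by simp
    then have x0: "x \<noteq> 0" using assms by auto
    then have "c * norm x \<le> x \<bullet> u" using \<open>c \<le> (x /\<^sub>R norm x) \<bullet> u\<close> by (simp add: field_simps)
    then show "x \<in> coneset u c - ({0} \<union> sphere 0 1)" using x x0 by (auto simp: coneset_def)
  next
    fix x assume x: "x \<in> coneset u c - ({0} \<union> sphere 0 1)"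
    then have x0: "x \<noteq> 0" and "norm x < 1" and cx: "c * norm x \<le> x \<bullet> u" by (auto simp: coneset_def)
    then have "c \<le> (x /\<^sub>R norm x) \<bullet> u" by (simp add: field_simps)
    then show "x \<in> ball 0 1 \<inter> (?g -` {\<theta>. c \<le> \<theta> \<bullet> u})" using \<open>norm x < 1\<close> by simp
  qed
  also have "measure lborel (coneset u c - ({0} \<union> sphere 0 1)) = measure lborel (coneset u c)"
    by (rule measure_Diff_null_set) (use null_sets.Un[OF countable_imp_null_set_lborel[of "{0::'a}"] sphere_null] coneset_borel in auto)
  also have "measure lborel (ball (0::'a) 1) = unit_ball_vol DIM('a)"
    using content_ball[of 1 "0::'a"] by simp
  finally show ?thesis .
qed


lemma unit_ball_vol_rec:
  "unit_ball_vol (real n + 2) = 2 * pi / (real n + 2) * unit_ball_vol (real n)"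
proof -
  have nz: "real n / 2 + 1 \<notin> \<int>\<^sub>\<le>\<^sub>0"
    by (metis add_nonneg_pos divide_nonneg_nonneg nonpos_Ints_nonpos not_le of_nat_0_le_iff zero_less_numeral zero_less_one zero_le_numeral)
  have g: "Gamma ((real n + 2) / 2 + 1) = (real n / 2 + 1) * Gamma (real n / 2 + 1)"
  proof -
    have e: "(real n + 2) / 2 + 1 = (real n / 2 + 1) + 1" by simp
    show ?thesis by (subst e) (rule Gamma_plus1[OF nz])
  qed
  have p: "pi powr ((real n + 2) / 2) = pi * pi powr (real n / 2)"
  proof -
    have e: "(real n + 2) / 2 = real n / 2 + 1" by simp
    show ?thesis by (subst e) (simp add: powr_add)
  qed
  have gp: "Gamma (real n / 2 + 1) > 0" by (intro Gamma_real_pos) simp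
  show ?thesis unfolding unit_ball_vol_def g p using gp by (simp add: field_simps)
qed

lemma unit_ball_vol_Beta:
  "unit_ball_vol (real n) * Beta (1 / 2) (real n / 2 + 1) = unit_ball_vol (real (Suc n))"
  by (auto simp: unit_ball_vol_def Beta_def Gamma_eq_zero_iff field_simps
          Gamma_one_half_real powr_half_sqrt [symmetric] powr_add [symmetric])

lemma kappa_0: "kappa 0 = pi"
  by (simp add: kappa_def)

lemma kappa_Suc: "kappa (Suc n) = unit_ball_vol (real (Suc n)) / unit_ball_vol (real n)"
proof -
  define f where "f x = sqrt (1 - x\<^sup>2) ^ n" for x :: real
  have fnn: "0 \<le> f x" if "x \<in> {-1..1}" for x
  proof -
    have "\<bar>x\<bar> \<le> 1" using that by auto
    then have "x\<^sup>2 \<le> 1" by (simp add: abs_square_le_1)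
    then show ?thesis unfolding f_def by simp
  qed
  have fc: "continuous_on {-1..1} f" unfolding f_def by (intro continuous_intros)
  have sub: "((\<lambda>t. sin t *\<^sub>R f (- cos t)) has_integral (integral {- cos 0..- cos pi} f - integral {- cos pi..- cos 0} f)) {0..pi}"
    by (rule has_integral_substitution_general[of "{}" 0 pi "\<lambda>t. - cos t" "-1" 1 f "sin"])
       (auto intro!: continuous_intros derivative_eq_intros fc)
  have eq: "sin t *\<^sub>R f (- cos t) = sin t ^ Suc n" if "t \<in> {0..pi}" for t
  proof -
    have s0: "sin t \<ge> 0" using that by (auto intro: sin_ge_zero)
    have "1 - (- cos t)\<^sup>2 = (sin t)\<^sup>2" by (simp add: sin_squared_eq)
    then have "f (- cos t) = sin t ^ n" using s0 by (simp add: f_def)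
    then show ?thesis by simp
  qed
  have "((\<lambda>t. sin t ^ Suc n) has_integral integral {-1..1} f) {0..pi}"
    using sub by (subst has_integral_cong[OF eq[symmetric]]) auto
  then have k: "kappa (Suc n) = integral {-1..1} f" unfolding kappa_def by (rule integral_unique)
  have fi: "(f has_integral integral {-1..1} f) {-1..1}"
    using integrable_continuous_interval[OF fc] by (simp add: has_integral_integral)
  have "(\<integral>\<^sup>+x. ennreal (f x) * indicator {-1..1} x \<partial>lborel) = ennreal (integral {-1..1} f)"
    by (rule nn_integral_has_integral_lebesgue'[OF _ fi]) (rule fnn)
  also have "(\<integral>\<^sup>+x. ennreal (f x) * indicator {-1..1} x \<partial>lborel) = (\<integral>\<^sup>+x. indicator {-1..1} x * sqrt (1 - x\<^sup>2) ^ n \<partial>lborel)"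
    by (intro nn_integral_cong) (auto simp: f_def indicator_def)
  also note emeasure_cball_aux_integral
  finally have "ennreal (Beta (1 / 2) (real n / 2 + 1)) = ennreal (integral {-1..1} f)" .
  moreover have "integral {-1..1} f \<ge> 0"
    by (rule integral_nonneg[OF integrable_continuous_interval[OF fc]]) (rule fnn)
  moreover have "Beta (1 / 2) (real n / 2 + 1) \<ge> 0"
    by (simp add: Beta_def)
  ultimately have "integral {-1..1} f = Beta (1 / 2) (real n / 2 + 1)" by simp
  moreover have "unit_ball_vol (real n) > 0" by (rule unit_ball_vol_pos) simp
  then have "unit_ball_vol (real n) \<noteq> 0" by linarith
  ultimately show ?thesis using k unit_ball_vol_Beta[of n] by (simp add: eq_divide_eq mult.commute)
qed

lemma kappa_pos: "kappa n > 0"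
proof (cases n)
  case 0 then show ?thesis by (simp add: kappa_0)
next
  case (Suc k)
  have "unit_ball_vol (real (Suc k)) > 0" "unit_ball_vol (real k) > 0" by (rule unit_ball_vol_pos, simp)+
  then show ?thesis by (simp add: Suc kappa_Suc)
qed

lemma Kd_kappa:
  assumes "d \<ge> 2"
  shows "unit_ball_vol (real (d - 1)) / (real d * unit_ball_vol (real d)) = 1 / ((real d - 1) * kappa (d - 2))"
proof -
  obtain n where n: "d = n + 2" using assms by (metis add.commute le_Suc_ex)
  have rd: "real d = real n + 2" by (simp add: n)
  have Vd: "unit_ball_vol (real d) = 2 * pi / real d * unit_ball_vol (real n)"
    unfolding rd by (rule unit_ball_vol_rec)
  show ?thesis
  proof (cases n)
    case 0
    then show ?thesis using Vd by (simp add: n kappa_0)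
  next
    case (Suc k)
    have rd1: "real (d - 1) = real k + 2" "real d - 1 = real k + 2" by (simp_all add: n Suc)
    have Vd1: "unit_ball_vol (real (d - 1)) = 2 * pi / (real d - 1) * unit_ball_vol (real k)"
      unfolding rd1 by (rule unit_ball_vol_rec)
    have kap: "kappa (d - 2) = unit_ball_vol (real n) / unit_ball_vol (real k)"
      by (simp add: n Suc kappa_Suc)
    have p1: "unit_ball_vol (real n) > 0" "unit_ball_vol (real k) > 0" by simp_all
    have "real d - 1 > 0" using assms by simp
    then have d1: "real d - 1 \<noteq> 0" "real d \<noteq> 0" by simp_all
    have A: "real d * (2 * pi / real d * unit_ball_vol (real n)) = 2 * pi * unit_ball_vol (real n)"
      using d1 by simp
    have B: "2 * pi / D * a / (2 * pi * b) = 1 / (D * (b / a))" if "D \<noteq> 0" "a > 0" "b > 0" for D a b :: real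
      using that pi_gt_zero by (simp add: field_simps)
    show ?thesis unfolding Vd Vd1 kap A by (rule B) (use d1 p1 in auto)
  qed
qed


lemma arcosh_le_iff:
  assumes "Y \<ge> 1" "T \<ge> 0"
  shows "arcosh Y \<le> T \<longleftrightarrow> Y \<le> cosh (T::real)"
proof -
  have "arcosh Y \<le> T \<longleftrightarrow> cosh (arcosh Y) \<le> cosh T"
    using assms by (subst cosh_real_nonneg_le_iff) auto
  also have "cosh (arcosh Y) = Y" using assms by simp
  finally show ?thesis .
qed

lemma hyp_cond:
  fixes \<theta>1 \<theta>2 :: "'a::euclidean_space"
  assumes n1: "norm \<theta>1 = 1" and n2: "norm \<theta>2 = 1" and a: "0 < a" "a < 1" and b: "0 < b" "b < 1"
    and z: "\<zeta> > 0" and R: "R \<ge> 0"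
  shows "hyp_dist \<zeta> (a *\<^sub>R \<theta>1) (b *\<^sub>R \<theta>2) \<le> R \<longleftrightarrow>
    (a\<^sup>2 + b\<^sup>2 - (cosh (\<zeta> * R) - 1) * ((1 - a\<^sup>2) * (1 - b\<^sup>2)) / 2) / (2 * a * b) \<le> \<theta>1 \<bullet> \<theta>2"
proof -
  have lin: "2 * (u - w) \<le> t \<longleftrightarrow> u - t / 2 \<le> w" for u w t :: real by (auto simp: field_simps)
  define zz where "zz = \<theta>1 \<bullet> \<theta>2"
  define N where "N = a\<^sup>2 + b\<^sup>2 - 2 * a * b * zz"
  define P where "P = (1 - a\<^sup>2) * (1 - b\<^sup>2)"
  have t11: "\<theta>1 \<bullet> \<theta>1 = 1" using n1 by (simp add: norm_eq_1)
  have t22: "\<theta>2 \<bullet> \<theta>2 = 1" using n2 by (simp add: norm_eq_1)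
  have nd: "(norm (a *\<^sub>R \<theta>1 - b *\<^sub>R \<theta>2))\<^sup>2 = N"
    unfolding power2_norm_eq_inner N_def zz_def
    by (simp add: inner_diff_left inner_diff_right t11 t22 inner_commute power2_eq_square algebra_simps)
  have na: "(norm (a *\<^sub>R \<theta>1))\<^sup>2 = a\<^sup>2" using n1 a by simp
  have nb: "(norm (b *\<^sub>R \<theta>2))\<^sup>2 = b\<^sup>2" using n2 b by simp
  have P0: "P > 0" unfolding P_def using a b by (intro mult_pos_pos) (auto simp: power_less_one_iff abs_square_less_1)
  have N0: "N \<ge> 0" using nd[symmetric] by simp
  define Y where "Y = 1 + 2 * N / P"
  have Y1: "Y \<ge> 1" unfolding Y_def using N0 P0 by simp
  have "hyp_dist \<zeta> (a *\<^sub>R \<theta>1) (b *\<^sub>R \<theta>2) = arcosh Y / \<zeta>"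
    unfolding hyp_dist_def Y_def P_def by (simp only: nd na nb)
  then have "hyp_dist \<zeta> (a *\<^sub>R \<theta>1) (b *\<^sub>R \<theta>2) \<le> R \<longleftrightarrow> arcosh Y \<le> \<zeta> * R"
    using z by (simp add: divide_le_eq mult.commute)
  also have "\<dots> \<longleftrightarrow> Y \<le> cosh (\<zeta> * R)" using Y1 z R by (intro arcosh_le_iff) auto
  also have "\<dots> \<longleftrightarrow> 2 * N / P \<le> cosh (\<zeta> * R) - 1"
    unfolding Y_def by linarith
  also have "\<dots> \<longleftrightarrow> 2 * N \<le> (cosh (\<zeta> * R) - 1) * P"
    using P0 by (simp add: pos_divide_le_eq)
  also have "\<dots> \<longleftrightarrow> (a\<^sup>2 + b\<^sup>2 - (cosh (\<zeta> * R) - 1) * P / 2) \<le> 2 * a * b * zz"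
    unfolding N_def by (rule lin)
  also have "\<dots> \<longleftrightarrow> (a\<^sup>2 + b\<^sup>2 - (cosh (\<zeta> * R) - 1) * P / 2) \<le> zz * (2 * a * b)"
    by (simp only: mult.commute[of "2 * a * b" zz])
  also have "\<dots> \<longleftrightarrow> (a\<^sup>2 + b\<^sup>2 - (cosh (\<zeta> * R) - 1) * P / 2) / (2 * a * b) \<le> zz"
    using a b by (simp add: divide_le_eq)
  finally show ?thesis unfolding zz_def P_def .
qed

lemma tanh_half_exp:
  "tanh (x / 2) = (exp x - 1) / (exp x + 1 :: real)"
proof -
  have "tanh (x / 2) = (1 - exp (- x)) / (1 + exp (- x))" by (simp add: tanh_real_altdef)
  also have "\<dots> = (exp x - 1) / (exp x + 1)"
  proof -
    have p: "exp x \<noteq> 0" by simp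
    have q1: "1 - exp (- x) = (exp x - 1) / exp x" using p by (simp add: exp_minus field_simps)
    have q2: "1 + exp (- x) = (exp x + 1) / exp x" using p by (simp add: exp_minus field_simps)
    show ?thesis unfolding q1 q2 using p by simp
  qed
  finally show ?thesis .
qed

lemma cc_identity:
  fixes A B E :: real
  assumes A: "A > 1" and B: "B > 1" and E: "E > 1"
  defines "a \<equiv> (A - 1) / (A + 1)" and "b \<equiv> (B - 1) / (B + 1)" and "C \<equiv> (E + 1 / E) / 2"
  shows "1 - (a\<^sup>2 + b\<^sup>2 - (C - 1) * ((1 - a\<^sup>2) * (1 - b\<^sup>2)) / 2) / (2 * a * b)
       = 2 * E / (A * B) * (((1 - 1 / E)\<^sup>2 - (A - B)\<^sup>2 / (A * B * E)) / ((1 - 1 / A\<^sup>2) * (1 - 1 / B\<^sup>2)))"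
proof -
  define G where "G = A * B * (E - 1)\<^sup>2 / E - (A - B)\<^sup>2"
  define X where "X = (C - 1) * ((1 - a\<^sup>2) * (1 - b\<^sup>2)) / 2"
  have a0: "a > 0" unfolding a_def using A by simp
  have b0: "b > 0" unfolding b_def using B by simp
  have s1: "1 - (a\<^sup>2 + b\<^sup>2 - X) / (2 * a * b) = (X - (a - b)\<^sup>2) / (2 * a * b)"
    using a0 b0 by (simp add: field_simps power2_eq_square)
  have pA: "(A + 1)\<^sup>2 > 0" "(B + 1)\<^sup>2 > 0" using A B by simp_all
  have e1: "1 - a\<^sup>2 = 4 * A / (A + 1)\<^sup>2"
    unfolding a_def power_divide using pA by (simp add: field_simps) (simp add: power2_eq_square algebra_simps)
  have e2: "1 - b\<^sup>2 = 4 * B / (B + 1)\<^sup>2"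
    unfolding b_def power_divide using pA by (simp add: field_simps) (simp add: power2_eq_square algebra_simps)
  have e3: "a - b = 2 * (A - B) / ((A + 1) * (B + 1))"
    unfolding a_def b_def using A B by (simp add: field_simps)
  have e4: "C - 1 = (E - 1)\<^sup>2 / (2 * E)"
    unfolding C_def using E by (simp add: field_simps power2_eq_square)
  have e5: "2 * a * b = 2 * (A - 1) * (B - 1) / ((A + 1) * (B + 1))"
    unfolding a_def b_def by simp
  have eX: "X = 4 * A * B * (E - 1)\<^sup>2 / (E * (A + 1)\<^sup>2 * (B + 1)\<^sup>2)"
    unfolding X_def e1 e2 e4 using A B E by (simp add: field_simps)
  have eab: "(a - b)\<^sup>2 = 4 * (A - B)\<^sup>2 / ((A + 1)\<^sup>2 * (B + 1)\<^sup>2)"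
    unfolding e3 by (simp add: power_mult_distrib power_divide) (simp add: power2_eq_square algebra_simps)
  have eN: "X - (a - b)\<^sup>2 = 4 * G / ((A + 1)\<^sup>2 * (B + 1)\<^sup>2)"
    unfolding eX eab G_def using A B E by (simp add: field_simps)
  have lhs: "(X - (a - b)\<^sup>2) / (2 * a * b) = 2 * G / ((A\<^sup>2 - 1) * (B\<^sup>2 - 1))"
  proof -
    have gen: "(4 * G / (p\<^sup>2 * r\<^sup>2)) / (2 * q * t / (p * r)) = 2 * G / ((p * q) * (r * t))"
      if "p \<noteq> 0" "q \<noteq> 0" "r \<noteq> 0" "t \<noteq> 0" for p q r t :: real
      using that by (simp add: field_simps) (simp add: power2_eq_square algebra_simps)
    have "(X - (a - b)\<^sup>2) / (2 * a * b) = (4 * G / ((A + 1)\<^sup>2 * (B + 1)\<^sup>2)) / (2 * (A - 1) * (B - 1) / ((A + 1) * (B + 1)))"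
      unfolding eN e5 ..
    also have "\<dots> = 2 * G / (((A + 1) * (A - 1)) * ((B + 1) * (B - 1)))"
      using A B by (intro gen) auto
    also have "((A + 1) * (A - 1)) = A\<^sup>2 - 1" by (simp add: power2_eq_square algebra_simps)
    also have "((B + 1) * (B - 1)) = B\<^sup>2 - 1" by (simp add: power2_eq_square algebra_simps)
    finally show ?thesis .
  qed
  have A2: "A\<^sup>2 > 1" "B\<^sup>2 > 1" using A B by (simp_all add: one_less_power)
  have rhs: "2 * E / (A * B) * (((1 - 1 / E)\<^sup>2 - (A - B)\<^sup>2 / (A * B * E)) / ((1 - 1 / A\<^sup>2) * (1 - 1 / B\<^sup>2)))
      = 2 * G / ((A\<^sup>2 - 1) * (B\<^sup>2 - 1))"
  proof -
    have r1: "(1 - 1 / A\<^sup>2) * (1 - 1 / B\<^sup>2) = (A\<^sup>2 - 1) * (B\<^sup>2 - 1) / (A\<^sup>2 * B\<^sup>2)"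
      using A B by (simp add: field_simps)
    have r2: "(1 - 1 / E)\<^sup>2 - (A - B)\<^sup>2 / (A * B * E) = G / (A * B * E)"
      unfolding G_def using A B E by (simp add: field_simps power2_eq_square)
    have gen: "2 * E / (A * B) * ((G / (A * B * E)) / (x * y / (A\<^sup>2 * B\<^sup>2))) = 2 * G / (x * y)"
      if "x \<noteq> 0" "y \<noteq> 0" for x y
      using that A B E by (simp add: field_simps) (simp add: power2_eq_square algebra_simps)
    show ?thesis unfolding r1 r2 using A2 by (intro gen) auto
  qed
  show ?thesis unfolding X_def[symmetric] s1 lhs rhs ..
qed


lemma cap_bounds:
  fixes u :: "'a::euclidean_space"
  assumes u: "norm u = 1" and c0: "0 < c" and c1: "c < 1" and d2: "DIM('a) \<ge> 2"
  defines "Q \<equiv> 1 / ((real DIM('a) - 1) * kappa (DIM('a) - 2))" and "s \<equiv> sqrt (1 - c\<^sup>2)" and "m \<equiv> DIM('a) - 1"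
  shows "Q * s ^ m * c \<le> measure unif_sphere {\<theta>::'a. c \<le> \<theta> \<bullet> u}"
    and "measure unif_sphere {\<theta>::'a. c \<le> \<theta> \<bullet> u} \<le> Q * s ^ m / c ^ m"
proof -
  obtain b0 :: 'a where b0: "b0 \<in> Basis" using nonempty_Basis by blast
  have nb0: "norm b0 = 1" using b0 by simp
  have cap: "measure unif_sphere {\<theta>::'a. c \<le> \<theta> \<bullet> u} = measure lborel (coneset b0 c) / unit_ball_vol DIM('a)"
    using unif_sphere_cap[OF c0, of u] measure_coneset_rot[OF u nb0, of c] by simp
  have V: "unit_ball_vol (real DIM('a)) > 0" by (rule unit_ball_vol_pos) simp
  have Qe: "Q = unit_ball_vol (real m) / (real DIM('a) * unit_ball_vol (real DIM('a)))"
    unfolding Q_def m_def using Kd_kappa[OF d2] by (simp add: of_nat_diff)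
  have lo: "unit_ball_vol m * s ^ m * c / DIM('a) \<le> measure lborel (coneset b0 c)"
    unfolding s_def m_def by (rule coneset_bounds(1)[OF b0 c0 c1])
  have hi: "measure lborel (coneset b0 c) \<le> unit_ball_vol m * s ^ m / (c ^ m * DIM('a))"
    unfolding s_def m_def by (rule coneset_bounds(2)[OF b0 c0 c1])
  have e1: "Q * s ^ m * c = (unit_ball_vol m * s ^ m * c / DIM('a)) / unit_ball_vol DIM('a)"
    unfolding Qe by (simp add: field_simps)
  have e2: "Q * s ^ m / c ^ m = (unit_ball_vol m * s ^ m / (c ^ m * DIM('a))) / unit_ball_vol DIM('a)"
    unfolding Qe by (simp add: field_simps)
  show "Q * s ^ m * c \<le> measure unif_sphere {\<theta>::'a. c \<le> \<theta> \<bullet> u}"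
    unfolding cap e1 by (rule divide_right_mono[OF lo]) (use V in simp)
  show "measure unif_sphere {\<theta>::'a. c \<le> \<theta> \<bullet> u} \<le> Q * s ^ m / c ^ m"
    unfolding cap e2 by (rule divide_right_mono[OF hi]) (use V in simp)
qed

lemma hyp_dist_meas:
  "(\<lambda>(x::'a::euclidean_space, y). hyp_dist \<zeta> (a *\<^sub>R x) (b *\<^sub>R y)) \<in> borel_measurable (borel \<Otimes>\<^sub>M borel)"
  unfolding hyp_dist_def arcosh_def by measurable

lemma P_bounds:
  fixes a b \<zeta> R cc :: real
  assumes d2: "DIM('a::euclidean_space) \<ge> 2" and a: "0 < a" "a < 1" and b: "0 < b" "b < 1"
    and z: "\<zeta> > 0" and R: "R \<ge> 0"
    and cc_def: "cc = (a\<^sup>2 + b\<^sup>2 - (cosh (\<zeta> * R) - 1) * ((1 - a\<^sup>2) * (1 - b\<^sup>2)) / 2) / (2 * a * b)"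
    and c0: "0 < cc" and c1: "cc < 1"
  defines "Q \<equiv> 1 / ((real DIM('a) - 1) * kappa (DIM('a) - 2))" and "s \<equiv> sqrt (1 - cc\<^sup>2)" and "m \<equiv> DIM('a) - 1"
  shows "Q * s ^ m * cc \<le> measure (unif_sphere \<Otimes>\<^sub>M (unif_sphere :: 'a measure))
              {(\<theta>1, \<theta>2). hyp_dist \<zeta> (a *\<^sub>R \<theta>1) (b *\<^sub>R \<theta>2) \<le> R}"
    and "measure (unif_sphere \<Otimes>\<^sub>M (unif_sphere :: 'a measure))
              {(\<theta>1, \<theta>2). hyp_dist \<zeta> (a *\<^sub>R \<theta>1) (b *\<^sub>R \<theta>2) \<le> R} \<le> Q * s ^ m / cc ^ m"
proof -
  let ?M = "unif_sphere :: 'a measure"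
  define S where "S = {(\<theta>1::'a, \<theta>2::'a). hyp_dist \<zeta> (a *\<^sub>R \<theta>1) (b *\<^sub>R \<theta>2) \<le> R}"
  define lo where "lo = Q * s ^ m * cc"
  define hi where "hi = Q * s ^ m / cc ^ m"
  interpret M: prob_space ?M by (rule prob_space_unif_sphere)
  have sp1: "emeasure ?M UNIV = 1" using M.emeasure_space_1 by simp
  have Q0: "Q > 0" unfolding Q_def using kappa_pos[of "DIM('a) - 2"] d2 by simp
  have "cc\<^sup>2 < 1" using c0 c1 by (simp add: abs_square_less_1)
  then have s0: "s \<ge> 0" unfolding s_def by simp
  have lo0: "lo \<ge> 0" unfolding lo_def using Q0 c0 s0 by simp
  have hi0: "hi \<ge> 0" unfolding hi_def using Q0 c0 s0 by simp
  have Sm: "S \<in> sets (?M \<Otimes>\<^sub>M ?M)"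
  proof -
    have "S = (\<lambda>(x, y). hyp_dist \<zeta> (a *\<^sub>R x) (b *\<^sub>R y)) -` {..R} \<inter> space (borel \<Otimes>\<^sub>M borel)"
      by (auto simp: S_def space_pair_measure)
    also have "\<dots> \<in> sets (borel \<Otimes>\<^sub>M borel)"
      by (rule measurable_sets[OF hyp_dist_meas]) simp
    finally show ?thesis by simp
  qed
  have slice: "emeasure ?M (Pair \<theta>1 -` S) = emeasure ?M {\<theta>. cc \<le> \<theta> \<bullet> \<theta>1}" if n1: "norm \<theta>1 = 1" for \<theta>1
  proof (rule emeasure_eq_AE)
    show "AE \<theta>2 in ?M. (\<theta>2 \<in> Pair \<theta>1 -` S) = (\<theta>2 \<in> {\<theta>. cc \<le> \<theta> \<bullet> \<theta>1})"
      using AE_unif_sphere_norm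
    proof eventually_elim
      case (elim \<theta>2)
      show ?case using hyp_cond[OF n1 elim a b z R] by (simp add: S_def cc_def[symmetric] inner_commute)
    qed
    show "Pair \<theta>1 -` S \<in> sets ?M" using Sm by (rule sets_Pair1)
    show "{\<theta>. cc \<le> \<theta> \<bullet> \<theta>1} \<in> sets ?M" by simp
  qed
  have capb: "ennreal lo \<le> emeasure ?M (Pair \<theta>1 -` S) \<and> emeasure ?M (Pair \<theta>1 -` S) \<le> ennreal hi"
    if n1: "norm \<theta>1 = 1" for \<theta>1
  proof -
    have "emeasure ?M (Pair \<theta>1 -` S) = ennreal (measure ?M {\<theta>. cc \<le> \<theta> \<bullet> \<theta>1})"
      unfolding slice[OF n1] by (simp add: M.emeasure_eq_measure)
    moreover have "lo \<le> measure ?M {\<theta>. cc \<le> \<theta> \<bullet> \<theta>1}"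
      unfolding lo_def Q_def s_def m_def by (rule cap_bounds(1)[OF n1 c0 c1 d2])
    moreover have "measure ?M {\<theta>. cc \<le> \<theta> \<bullet> \<theta>1} \<le> hi"
      unfolding hi_def Q_def s_def m_def by (rule cap_bounds(2)[OF n1 c0 c1 d2])
    ultimately show ?thesis by (simp add: ennreal_leI)
  qed
  have emS: "emeasure (?M \<Otimes>\<^sub>M ?M) S = (\<integral>\<^sup>+ \<theta>1. emeasure ?M (Pair \<theta>1 -` S) \<partial>?M)"
    using Sm by (rule M.emeasure_pair_measure_alt)
  have "(\<integral>\<^sup>+ \<theta>1. ennreal lo \<partial>?M) \<le> (\<integral>\<^sup>+ \<theta>1. emeasure ?M (Pair \<theta>1 -` S) \<partial>?M)"
    using AE_unif_sphere_norm by (intro nn_integral_mono_AE) (auto elim!: eventually_mono dest: capb)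
  then have L: "ennreal lo \<le> emeasure (?M \<Otimes>\<^sub>M ?M) S" using emS by (simp add: sp1)
  have "(\<integral>\<^sup>+ \<theta>1. emeasure ?M (Pair \<theta>1 -` S) \<partial>?M) \<le> (\<integral>\<^sup>+ \<theta>1. ennreal hi \<partial>?M)"
    using AE_unif_sphere_norm by (intro nn_integral_mono_AE) (auto elim!: eventually_mono dest: capb)
  then have U: "emeasure (?M \<Otimes>\<^sub>M ?M) S \<le> ennreal hi" using emS by (simp add: sp1)
  have fin: "emeasure (?M \<Otimes>\<^sub>M ?M) S \<noteq> \<top>" using U by (metis ennreal_neq_top neq_top_trans)
  have eqm: "emeasure (?M \<Otimes>\<^sub>M ?M) S = ennreal (measure (?M \<Otimes>\<^sub>M ?M) S)"
    by (rule emeasure_eq_ennreal_measure[OF fin])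
  have "measure (?M \<Otimes>\<^sub>M ?M) S \<le> hi"
    using U hi0 unfolding eqm by (simp add: ennreal_le_iff)
  moreover have "lo \<le> measure (?M \<Otimes>\<^sub>M ?M) S"
    using L unfolding eqm by (simp add: ennreal_le_iff)
  ultimately show "Q * s ^ m * cc \<le> measure (?M \<Otimes>\<^sub>M ?M) {(\<theta>1, \<theta>2). hyp_dist \<zeta> (a *\<^sub>R \<theta>1) (b *\<^sub>R \<theta>2) \<le> R}"
    "measure (?M \<Otimes>\<^sub>M ?M) {(\<theta>1, \<theta>2). hyp_dist \<zeta> (a *\<^sub>R \<theta>1) (b *\<^sub>R \<theta>2) \<le> R} \<le> Q * s ^ m / cc ^ m"
    unfolding S_def[symmetric] lo_def[symmetric] hi_def[symmetric] by simp_all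
qed


lemma r_bounds:
  fixes A B E \<eta> :: real
  assumes A: "A > 1" and B: "B > 1" and E: "E > 1" and e0: "0 < \<eta>" and e1: "\<eta> \<le> 1/8"
    and hE: "1 / E \<le> \<eta>" and hA: "1 / A\<^sup>2 \<le> \<eta>" and hB: "1 / B\<^sup>2 \<le> \<eta>"
    and hAB: "A / (B * E) \<le> \<eta>" and hBA: "B / (A * E) \<le> \<eta>"
  defines "r \<equiv> ((1 - 1 / E)\<^sup>2 - (A - B)\<^sup>2 / (A * B * E)) / ((1 - 1 / A\<^sup>2) * (1 - 1 / B\<^sup>2))"
  shows "(1 - \<eta>)\<^sup>2 - 2 * \<eta> \<le> r" and "r \<le> 1 / (1 - \<eta>)\<^sup>2" and "(1 - \<eta>)\<^sup>2 - 2 * \<eta> > 0"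
proof -
  define num where "num = (1 - 1 / E)\<^sup>2 - (A - B)\<^sup>2 / (A * B * E)"
  define den where "den = (1 - 1 / A\<^sup>2) * (1 - 1 / B\<^sup>2)"
  have r: "r = num / den" unfolding r_def num_def den_def ..
  have ABE: "A * B * E > 0" using A B E by simp
  have x0: "(A - B)\<^sup>2 / (A * B * E) \<ge> 0" using ABE by simp
  have "(A - B)\<^sup>2 \<le> A\<^sup>2 + B\<^sup>2" using A B by (simp add: power2_eq_square algebra_simps)
  then have "(A - B)\<^sup>2 / (A * B * E) \<le> (A\<^sup>2 + B\<^sup>2) / (A * B * E)"
    using ABE by (simp add: divide_right_mono)
  also have "(A\<^sup>2 + B\<^sup>2) / (A * B * E) = A / (B * E) + B / (A * E)"
    using A B E by (simp add: field_simps power2_eq_square)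
  finally have x2: "(A - B)\<^sup>2 / (A * B * E) \<le> 2 * \<eta>" using hAB hBA by linarith
  have iE: "0 < 1 / E" "1 / E < 1" using E by simp_all
  have "(1 - \<eta>)\<^sup>2 \<le> (1 - 1 / E)\<^sup>2" using hE e1 by (intro power_mono) auto
  moreover have "(1 - 1 / E)\<^sup>2 \<le> 1" using iE by (simp add: power_le_one)
  ultimately have n1: "(1 - \<eta>)\<^sup>2 - 2 * \<eta> \<le> num" and n2: "num \<le> 1"
    unfolding num_def using x0 x2 by linarith+
  have pos: "(1 - \<eta>)\<^sup>2 - 2 * \<eta> > 0"
  proof -
    have "(7/8::real)\<^sup>2 \<le> (1 - \<eta>)\<^sup>2" using e1 by (intro power_mono) auto
    then show ?thesis using e1 by (simp add: power2_eq_square)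
  qed
  then show "(1 - \<eta>)\<^sup>2 - 2 * \<eta> > 0" .
  have iA: "0 < 1 / A\<^sup>2" "1 / A\<^sup>2 < 1" using A by (simp_all add: one_less_power)
  have iB: "0 < 1 / B\<^sup>2" "1 / B\<^sup>2 < 1" using B by (simp_all add: one_less_power)
  have d1: "den \<le> 1" unfolding den_def using iA iB by (intro mult_le_one) auto
  have d0: "den > 0" unfolding den_def using iA iB by simp
  have d2: "(1 - \<eta>) * (1 - \<eta>) \<le> den" unfolding den_def using hA hB e1 by (intro mult_mono) auto
  have num0: "num > 0" using n1 pos by linarith
  have "num \<le> num / den" using num0 d0 d1 by (simp add: le_divide_eq)
  then show "(1 - \<eta>)\<^sup>2 - 2 * \<eta> \<le> r" unfolding r using n1 by linarith
  have "num / den \<le> 1 / den" using n2 d0 by (simp add: divide_right_mono)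
  also have "1 / den \<le> 1 / (1 - \<eta>)\<^sup>2"
    using d2 d0 e1 by (intro divide_left_mono) (auto simp: power2_eq_square)
  finally show "r \<le> 1 / (1 - \<eta>)\<^sup>2" unfolding r .
qed


lemma exp_le_eta:
  fixes \<zeta> X \<omega> :: real
  assumes "\<zeta> > 0" "X \<le> - \<omega>"
  shows "exp (\<zeta> * X) \<le> exp (- \<zeta> * \<omega>)"
proof -
  have "\<zeta> * X \<le> \<zeta> * (- \<omega>)" using assms by (intro mult_left_mono) auto
  then show ?thesis by simp
qed

lemma pointwise:
  fixes \<zeta> R \<omega> \<eta> t1 t2 :: real
  assumes d2: "DIM('a::euclidean_space) \<ge> 2" and z: "\<zeta> > 0" and w0: "\<omega> > 0" and Rw: "\<omega> \<le> R"
    and eta: "\<eta> = exp (- \<zeta> * \<omega>)" and e8: "\<eta> \<le> 1/8"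
    and t1: "0 \<le> t1" and t2: "0 \<le> t2" and tt: "t1 + t2 \<le> R - \<omega>"
  defines "P \<equiv> measure (unif_sphere \<Otimes>\<^sub>M (unif_sphere :: 'a measure))
              {(\<theta>1, \<theta>2). hyp_dist \<zeta> (hyp_point \<zeta> (R - t1) \<theta>1) (hyp_point \<zeta> (R - t2) \<theta>2) \<le> R}"
    and "F \<equiv> 2 ^ (DIM('a) - 1) / ((DIM('a) - 1) * kappa (DIM('a) - 2))
              * exp (- \<zeta> * (DIM('a) - 1) * (R - t1 - t2) / 2)"
    and "m \<equiv> DIM('a) - 1"
  shows "sqrt (((1 - \<eta>)\<^sup>2 - 2 * \<eta>) * (1 - \<eta> / (1 - \<eta>)\<^sup>2)) ^ m * (1 - 2 * \<eta> / (1 - \<eta>)\<^sup>2) \<le> P / F"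
    and "P / F \<le> sqrt (1 / (1 - \<eta>)\<^sup>2) ^ m / (1 - 2 * \<eta> / (1 - \<eta>)\<^sup>2) ^ m"
proof -
  define \<rho>1 where "\<rho>1 = R - t1"
  define \<rho>2 where "\<rho>2 = R - t2"
  define D where "D = R - t1 - t2"
  have D: "D \<ge> \<omega>" using tt by (simp add: D_def)
  have r1: "\<rho>1 \<ge> \<omega>" and r2: "\<rho>2 \<ge> \<omega>" using D t1 t2 by (simp_all add: D_def \<rho>1_def \<rho>2_def)
  define A where "A = exp (\<zeta> * \<rho>1)"
  define B where "B = exp (\<zeta> * \<rho>2)"
  define E where "E = exp (\<zeta> * R)"
  have A1: "A > 1" unfolding A_def using z r1 w0 by simp
  have B1: "B > 1" unfolding B_def using z r2 w0 by simp
  have E1: "E > 1" unfolding E_def using z Rw w0 by simp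
  have e0: "\<eta> > 0" unfolding eta by simp
  have hE: "1 / E \<le> \<eta>"
  proof -
    have "1 / E = exp (\<zeta> * (- R))" unfolding E_def by (simp add: exp_minus field_simps)
    also have "\<dots> \<le> \<eta>" unfolding eta using z Rw by (intro exp_le_eta) auto
    finally show ?thesis .
  qed
  have hA: "1 / A\<^sup>2 \<le> \<eta>"
  proof -
    have "A\<^sup>2 = exp (2 * (\<zeta> * \<rho>1))" unfolding A_def using exp_of_nat_mult[of 2 "\<zeta> * \<rho>1"] by simp
    then have "1 / A\<^sup>2 = exp (- (2 * (\<zeta> * \<rho>1)))" by (simp add: exp_minus inverse_eq_divide)
    also have "exp (- (2 * (\<zeta> * \<rho>1))) = exp (\<zeta> * (- 2 * \<rho>1))" by (rule arg_cong[where f=exp]) (simp add: algebra_simps)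
    also have "\<dots> \<le> \<eta>" unfolding eta using z r1 w0 by (intro exp_le_eta) auto
    finally show ?thesis .
  qed
  have hB: "1 / B\<^sup>2 \<le> \<eta>"
  proof -
    have "B\<^sup>2 = exp (2 * (\<zeta> * \<rho>2))" unfolding B_def using exp_of_nat_mult[of 2 "\<zeta> * \<rho>2"] by simp
    then have "1 / B\<^sup>2 = exp (- (2 * (\<zeta> * \<rho>2)))" by (simp add: exp_minus inverse_eq_divide)
    also have "exp (- (2 * (\<zeta> * \<rho>2))) = exp (\<zeta> * (- 2 * \<rho>2))" by (rule arg_cong[where f=exp]) (simp add: algebra_simps)
    also have "\<dots> \<le> \<eta>" unfolding eta using z r2 w0 by (intro exp_le_eta) auto
    finally show ?thesis .
  qed
  have hAB: "A / (B * E) \<le> \<eta>"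
  proof -
    have "\<zeta> * (\<rho>1 - \<rho>2 - R) = \<zeta> * \<rho>1 - (\<zeta> * \<rho>2 + \<zeta> * R)" by (simp add: algebra_simps)
    then have "A / (B * E) = exp (\<zeta> * (\<rho>1 - \<rho>2 - R))"
      unfolding A_def B_def E_def by (simp add: exp_diff exp_add)
    also have "\<dots> \<le> \<eta>" unfolding eta using z tt t1 by (intro exp_le_eta) (auto simp: \<rho>1_def \<rho>2_def)
    finally show ?thesis .
  qed
  have hBA: "B / (A * E) \<le> \<eta>"
  proof -
    have "\<zeta> * (\<rho>2 - \<rho>1 - R) = \<zeta> * \<rho>2 - (\<zeta> * \<rho>1 + \<zeta> * R)" by (simp add: algebra_simps)
    then have "B / (A * E) = exp (\<zeta> * (\<rho>2 - \<rho>1 - R))"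
      unfolding A_def B_def E_def by (simp add: exp_diff exp_add)
    also have "\<dots> \<le> \<eta>" unfolding eta using z tt t2 by (intro exp_le_eta) (auto simp: \<rho>1_def \<rho>2_def)
    finally show ?thesis .
  qed
  define \<tau> where "\<tau> = 2 * E / (A * B)"
  have \<tau>e: "\<tau> = 2 * exp (- \<zeta> * D)"
  proof -
    have "- \<zeta> * D = \<zeta> * R - (\<zeta> * \<rho>1 + \<zeta> * \<rho>2)" by (simp add: D_def \<rho>1_def \<rho>2_def algebra_simps)
    then show ?thesis unfolding \<tau>_def A_def B_def E_def by (simp add: exp_diff exp_add)
  qed
  have \<tau>0: "\<tau> > 0" unfolding \<tau>e by simp
  have \<tau>1: "\<tau> \<le> 2 * \<eta>"
  proof -
    have "exp (- \<zeta> * D) = exp (\<zeta> * (- D))" by simp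
    also have "\<dots> \<le> \<eta>" unfolding eta using z D by (intro exp_le_eta) auto
    finally show ?thesis unfolding \<tau>e by simp
  qed
  define a where "a = (A - 1) / (A + 1)"
  define b where "b = (B - 1) / (B + 1)"
  have ha: "hyp_point \<zeta> (R - t1) \<theta> = a *\<^sub>R \<theta>" for \<theta> :: 'a
    unfolding hyp_point_def a_def A_def \<rho>1_def using tanh_half_exp[of "\<zeta> * (R - t1)"] by simp
  have hb: "hyp_point \<zeta> (R - t2) \<theta> = b *\<^sub>R \<theta>" for \<theta> :: 'a
    unfolding hyp_point_def b_def B_def \<rho>2_def using tanh_half_exp[of "\<zeta> * (R - t2)"] by simp
  have a0: "0 < a" "a < 1" unfolding a_def using A1 by simp_all
  have b0: "0 < b" "b < 1" unfolding b_def using B1 by simp_all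
  have ch: "cosh (\<zeta> * R) = (E + 1 / E) / 2"
    unfolding E_def cosh_def by (simp add: exp_minus field_simps)
  define cc where "cc = (a\<^sup>2 + b\<^sup>2 - (cosh (\<zeta> * R) - 1) * ((1 - a\<^sup>2) * (1 - b\<^sup>2)) / 2) / (2 * a * b)"
  define r where "r = ((1 - 1 / E)\<^sup>2 - (A - B)\<^sup>2 / (A * B * E)) / ((1 - 1 / A\<^sup>2) * (1 - 1 / B\<^sup>2))"
  have \<delta>: "1 - cc = \<tau> * r"
    unfolding cc_def ch a_def b_def \<tau>_def r_def by (rule cc_identity[OF A1 B1 E1])
  have rlo: "(1 - \<eta>)\<^sup>2 - 2 * \<eta> \<le> r" and rhi: "r \<le> 1 / (1 - \<eta>)\<^sup>2" and lop: "(1 - \<eta>)\<^sup>2 - 2 * \<eta> > 0"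
    unfolding r_def using r_bounds[OF A1 B1 E1 e0 e8 hE hA hB hAB hBA] by simp_all
  have r0: "r > 0" using rlo lop by linarith
  define \<delta> where "\<delta> = 1 - cc"
  have \<delta>0: "\<delta> > 0" unfolding \<delta>_def \<delta> using \<tau>0 r0 by simp
  have \<delta>1: "\<delta> \<le> 2 * \<eta> / (1 - \<eta>)\<^sup>2"
  proof -
    have "\<delta> \<le> (2 * \<eta>) * (1 / (1 - \<eta>)\<^sup>2)" unfolding \<delta>_def \<delta>
      using \<tau>1 rhi \<tau>0 r0 by (intro mult_mono) auto
    then show ?thesis by simp
  qed
  define k0 where "k0 = 1 - 2 * \<eta> / (1 - \<eta>)\<^sup>2"
  have ne: "(1 - \<eta>)\<^sup>2 > 0" using e8 by simp
  have k0p: "k0 > 0"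
  proof -
    have "2 * \<eta> / (1 - \<eta>)\<^sup>2 < 1" using lop ne by (simp add: divide_less_eq)
    then show ?thesis unfolding k0_def by simp
  qed
  have cck: "k0 \<le> cc" using \<delta>1 unfolding k0_def \<delta>_def by simp
  have c0: "0 < cc" using k0p cck by linarith
  have c1: "cc < 1" using \<delta>0 unfolding \<delta>_def by simp
  define Q where "Q = 1 / ((real DIM('a) - 1) * kappa (DIM('a) - 2))"
  define s where "s = sqrt (1 - cc\<^sup>2)"
  have R0: "R \<ge> 0" using Rw w0 by simp
  have Peq: "P = measure (unif_sphere \<Otimes>\<^sub>M (unif_sphere :: 'a measure))
              {(\<theta>1, \<theta>2). hyp_dist \<zeta> (a *\<^sub>R \<theta>1) (b *\<^sub>R \<theta>2) \<le> R}"
    unfolding P_def ha hb ..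
  have Plo: "Q * s ^ m * cc \<le> P" and Phi: "P \<le> Q * s ^ m / cc ^ m"
    unfolding Peq Q_def s_def m_def using P_bounds[OF d2 a0 b0 z R0 cc_def c0 c1] by simp_all
  define w where "w = exp (- \<zeta> * D / 2)"
  have w0': "w > 0" unfolding w_def by simp
  have Q0: "Q > 0" unfolding Q_def using kappa_pos[of "DIM('a) - 2"] d2 by simp
  have Feq: "F = Q * (2 * w) ^ m"
  proof -
    have rm: "real DIM('a) - 1 = real m" unfolding m_def using d2 by (simp add: of_nat_diff)
    have "exp (- \<zeta> * (real DIM('a) - 1) * (R - t1 - t2) / 2) = exp (real m * (- \<zeta> * D / 2))"
      unfolding rm D_def by (simp add: algebra_simps)
    also have "\<dots> = w ^ m" unfolding w_def by (rule exp_of_nat_mult)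
    finally have "exp (- \<zeta> * (real DIM('a) - 1) * (R - t1 - t2) / 2) = w ^ m" .
    then show ?thesis unfolding F_def Q_def m_def by (simp add: power_mult_distrib)
  qed
  have F0: "F > 0" unfolding Feq using Q0 w0' by simp
  define g2 where "g2 = r * (1 - \<delta> / 2)"
  have w2: "(2 * w)\<^sup>2 = 2 * \<tau>"
  proof -
    have "w\<^sup>2 = exp (- \<zeta> * D)" unfolding w_def power2_eq_square mult_exp_exp by simp
    then show ?thesis unfolding \<tau>e by (simp add: power_mult_distrib)
  qed
  have s2: "1 - cc\<^sup>2 = (2 * w)\<^sup>2 * g2"
  proof -
    have "1 - cc\<^sup>2 = \<delta> * (2 - \<delta>)" unfolding \<delta>_def by (simp add: power2_eq_square algebra_simps)
    also have "\<dots> = (2 * \<tau>) * (r * (1 - \<delta> / 2))" unfolding \<delta>_def \<delta> by (simp add: algebra_simps)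
    finally show ?thesis unfolding w2 g2_def .
  qed
  have hd: "1 - \<delta> / 2 \<ge> 1 - \<eta> / (1 - \<eta>)\<^sup>2"
  proof -
    have "2 * \<eta> / (1 - \<eta>)\<^sup>2 = 2 * (\<eta> / (1 - \<eta>)\<^sup>2)" by simp
    then show ?thesis using \<delta>1 by linarith
  qed
  have hd0: "1 - \<eta> / (1 - \<eta>)\<^sup>2 > 0" using k0p unfolding k0_def by simp
  have hd1: "1 - \<delta> / 2 \<le> 1" using \<delta>0 by simp
  have g2lo: "((1 - \<eta>)\<^sup>2 - 2 * \<eta>) * (1 - \<eta> / (1 - \<eta>)\<^sup>2) \<le> g2"
    unfolding g2_def using rlo hd lop hd0 by (intro mult_mono) auto
  have g2hi: "g2 \<le> 1 / (1 - \<eta>)\<^sup>2"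
  proof -
    have "g2 \<le> r * 1" unfolding g2_def using hd1 r0 by (intro mult_left_mono) auto
    then show ?thesis using rhi by simp
  qed
  have g20: "g2 \<ge> 0" using g2lo lop hd0 by (smt (verit) mult_pos_pos)
  have seq: "s = 2 * w * sqrt g2"
    unfolding s_def s2 using w0' by (simp add: real_sqrt_mult)
  have ratio_s: "s ^ m / (2 * w) ^ m = sqrt g2 ^ m"
    unfolding seq using w0' by (simp add: power_mult_distrib)
  have low: "sqrt g2 ^ m * cc \<le> P / F"
  proof -
    have "sqrt g2 ^ m * cc = (Q * s ^ m * cc) / F"
      unfolding Feq using Q0 w0' ratio_s[symmetric] by (simp add: field_simps)
    also have "\<dots> \<le> P / F" using F0 by (intro divide_right_mono[OF Plo]) simp
    finally show ?thesis .
  qed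
  have high: "P / F \<le> sqrt g2 ^ m / cc ^ m"
  proof -
    have "P / F \<le> (Q * s ^ m / cc ^ m) / F" using F0 by (intro divide_right_mono[OF Phi]) simp
    also have "\<dots> = sqrt g2 ^ m / cc ^ m"
      unfolding Feq using Q0 w0' c0 ratio_s[symmetric] by (simp add: field_simps)
    finally show ?thesis .
  qed
  show "sqrt (((1 - \<eta>)\<^sup>2 - 2 * \<eta>) * (1 - \<eta> / (1 - \<eta>)\<^sup>2)) ^ m * (1 - 2 * \<eta> / (1 - \<eta>)\<^sup>2) \<le> P / F"
  proof -
    have "sqrt (((1 - \<eta>)\<^sup>2 - 2 * \<eta>) * (1 - \<eta> / (1 - \<eta>)\<^sup>2)) ^ m \<le> sqrt g2 ^ m"
      using g2lo lop hd0 by (intro power_mono real_sqrt_le_mono) auto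
    then have "sqrt (((1 - \<eta>)\<^sup>2 - 2 * \<eta>) * (1 - \<eta> / (1 - \<eta>)\<^sup>2)) ^ m * k0 \<le> sqrt g2 ^ m * cc"
      using cck k0p g20 by (intro mult_mono) auto
    then show ?thesis using low unfolding k0_def by linarith
  qed
  show "P / F \<le> sqrt (1 / (1 - \<eta>)\<^sup>2) ^ m / (1 - 2 * \<eta> / (1 - \<eta>)\<^sup>2) ^ m"
  proof -
    have "sqrt g2 ^ m \<le> sqrt (1 / (1 - \<eta>)\<^sup>2) ^ m"
      using g2hi g20 by (intro power_mono real_sqrt_le_mono) auto
    moreover have "k0 ^ m \<le> cc ^ m" using cck k0p by (intro power_mono) auto
    moreover have "k0 ^ m > 0" using k0p by simp
    ultimately have "sqrt g2 ^ m / cc ^ m \<le> sqrt (1 / (1 - \<eta>)\<^sup>2) ^ m / k0 ^ m"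
      by (intro frac_le) auto
    then show ?thesis using high unfolding k0_def by linarith
  qed
qed


lemma lnln_le:
  fixes x :: real assumes "x > 1" shows "ln (ln x) \<le> x"
proof -
  have l0: "ln x > 0" using assms by simp
  have "ln (ln x) \<le> ln x - 1" using ln_le_minus_one[OF l0] .
  also have "ln x \<le> x - 1" using assms by (intro ln_le_minus_one) auto
  finally show ?thesis by simp
qed

theorem lemma3p2:
  fixes \<zeta> :: real and R :: "nat \<Rightarrow> real"
  assumes d2: "DIM('a::euclidean_space) \<ge> 2"
    and zeta: "\<zeta> > 0"
    and R: "filterlim R at_top sequentially"
  defines "P \<equiv> \<lambda>n t1 t2. measure (unif_sphere \<Otimes>\<^sub>M (unif_sphere :: 'a measure))
              {(\<theta>1, \<theta>2). hyp_dist \<zeta> (hyp_point \<zeta> (R n - t1) \<theta>1)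
                                     (hyp_point \<zeta> (R n - t2) \<theta>2) \<le> R n}"
    and "F \<equiv> \<lambda>n t1 t2. 2 ^ (DIM('a) - 1) / ((DIM('a) - 1) * kappa (DIM('a) - 2))
              * exp (- \<zeta> * (DIM('a) - 1) * (R n - t1 - t2) / 2)"
    and "\<omega> \<equiv> \<lambda>n. ln (ln (R n))"
  shows "\<forall>\<epsilon>>0. \<forall>\<^sub>F n in sequentially. \<forall>t1 t2.
           0 \<le> t1 \<longrightarrow> 0 \<le> t2 \<longrightarrow> t1 \<le> R n \<longrightarrow> t2 \<le> R n \<longrightarrow> t1 + t2 \<le> R n - \<omega> n \<longrightarrow>
           \<bar>P n t1 t2 / F n t1 t2 - 1\<bar> \<le> \<epsilon>"
proof (intro allI impI)
  fix \<epsilon> :: real assume \<epsilon>: "\<epsilon> > 0"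
  define m where "m = DIM('a) - 1"
  define Lf where "Lf x = sqrt (((1 - x)\<^sup>2 - 2 * x) * (1 - x / (1 - x)\<^sup>2)) ^ m * (1 - 2 * x / (1 - x)\<^sup>2)" for x :: real
  define Uf where "Uf x = sqrt (1 / (1 - x)\<^sup>2) ^ m / (1 - 2 * x / (1 - x)\<^sup>2) ^ m" for x :: real
  define \<eta> where "\<eta> n = exp (- \<zeta> * \<omega> n)" for n
  have \<omega>lim: "filterlim \<omega> at_top sequentially"
    unfolding \<omega>_def by (intro filterlim_compose[OF ln_at_top] filterlim_compose[OF ln_at_top R])
  have "filterlim (\<lambda>n. \<zeta> * \<omega> n) at_top sequentially"
    by (rule filterlim_tendsto_pos_mult_at_top[OF tendsto_const zeta \<omega>lim])
  then have "filterlim (\<lambda>n. - \<zeta> * \<omega> n) at_bot sequentially"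
    by (simp add: filterlim_uminus_at_bot)
  then have \<eta>lim: "\<eta> \<longlonglongrightarrow> 0"
    unfolding \<eta>_def by (rule filterlim_compose[OF exp_at_bot])
  have "(\<lambda>n. Lf (\<eta> n)) \<longlonglongrightarrow> Lf 0"
    unfolding Lf_def by (intro tendsto_intros \<eta>lim) auto
  moreover have "Lf 0 = 1" by (simp add: Lf_def)
  ultimately have Llim: "(\<lambda>n. Lf (\<eta> n)) \<longlonglongrightarrow> 1" by simp
  have "(\<lambda>n. Uf (\<eta> n)) \<longlonglongrightarrow> Uf 0"
    unfolding Uf_def by (intro tendsto_intros \<eta>lim) auto
  moreover have "Uf 0 = 1" by (simp add: Uf_def)
  ultimately have Ulim: "(\<lambda>n. Uf (\<eta> n)) \<longlonglongrightarrow> 1" by simp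
  have ev1: "\<forall>\<^sub>F n in sequentially. Lf (\<eta> n) > 1 - \<epsilon>"
    using Llim \<epsilon> by (intro order_tendstoD(1)) auto
  have ev2: "\<forall>\<^sub>F n in sequentially. Uf (\<eta> n) < 1 + \<epsilon>"
    using Ulim \<epsilon> by (intro order_tendstoD(2)) auto
  have ev3: "\<forall>\<^sub>F n in sequentially. \<eta> n < 1/8"
    using \<eta>lim by (intro order_tendstoD(2)) auto
  have ev4: "\<forall>\<^sub>F n in sequentially. \<omega> n > 0"
    using \<omega>lim by (simp add: filterlim_at_top_dense)
  have ev5: "\<forall>\<^sub>F n in sequentially. R n > 1"
    using R by (simp add: filterlim_at_top_dense)
  show "\<forall>\<^sub>F n in sequentially. \<forall>t1 t2.
           0 \<le> t1 \<longrightarrow> 0 \<le> t2 \<longrightarrow> t1 \<le> R n \<longrightarrow> t2 \<le> R n \<longrightarrow> t1 + t2 \<le> R n - \<omega> n \<longrightarrow>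
           \<bar>P n t1 t2 / F n t1 t2 - 1\<bar> \<le> \<epsilon>"
    using ev1 ev2 ev3 ev4 ev5
  proof eventually_elim
    case (elim n)
    have Rw: "\<omega> n \<le> R n" unfolding \<omega>_def using lnln_le[OF elim(5)] .
    show ?case
    proof (intro allI impI)
      fix t1 t2 :: real
      assume t1: "0 \<le> t1" and t2: "0 \<le> t2" and "t1 \<le> R n" "t2 \<le> R n" and tt: "t1 + t2 \<le> R n - \<omega> n"
      have lo: "Lf (\<eta> n) \<le> P n t1 t2 / F n t1 t2"
        unfolding Lf_def P_def F_def m_def
        by (rule pointwise(1)[OF d2 zeta elim(4) Rw \<eta>_def _ t1 t2 tt]) (use elim(3) in simp)
      have hi: "P n t1 t2 / F n t1 t2 \<le> Uf (\<eta> n)"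
        unfolding Uf_def P_def F_def m_def
        by (rule pointwise(2)[OF d2 zeta elim(4) Rw \<eta>_def _ t1 t2 tt]) (use elim(3) in simp)
      show "\<bar>P n t1 t2 / F n t1 t2 - 1\<bar> \<le> \<epsilon>" using lo hi elim(1) elim(2) by linarith
    qed
  qed
qed


end
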